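(* Let $D$ be a double extended meta-interpreter, $P$ a definite program, $Q_0$ an atomic query of the language of $P$, and $u_1,\dots,u_n$ terms. Then for every call $\mathit{solve}(Q,t_1,\dots,t_n)\in\mathrm{Call}(D\cup\mathit{ce}^D(P),\mathit{solve}(Q_0,u_1,\dots,u_n))$ there exists a call $\mathit{solve}(G)\in\mathrm{Call}(M_0\cup\mathit{ce}(P),\mathit{solve}(Q_0))$ such that $Q$ is an instance of $G$.
   Context: Logic programs are definite; LD-derivations use the leftmost selection rule. For a program $P$ and a set of queries $S$, $\mathrm{Call}(P,S)$ is the set of atoms $A$ such that a variant of $A$ is a selected atom in some branch of the LD-tree of $P\cup\{Q\}$ for some $Q\in S$; $\mathrm{Call}(P,Q)=\mathrm{Call}(P,\{Q\})$. A double extended meta-interpreter is a definite program consisting of three clauses of the form $\mathit{solve}(\mathit{true},t_{11},\dots,t_{1n})\leftarrow C_{11},\dots,C_{1m_1}.$ $\mathit{solve}((A,B),t_{21},\dots,t_{2n})\leftarrow D_{11},\dots,D_{1k_1},\mathit{solve}(A,t_{31},\dots,t_{3n}),D_{21},\dots,D_{2k_2},\mathit{solve}(B,t_{41},\dots,t_{4n}),C_{21},\dots,C_{2m_2}.$ $\mathit{solve}(A,t_{51},\dots,t_{5n})\leftarrow D_{31},\dots,D_{3k_3},\mathit{clause}(A,B,s_1,\dots,s_k),D_{41},\dots,D_{4k_4},\mathit{solve}(B,t_{61},\dots,t_{6n}),C_{31},\dots,C_{3m_3}.$ where $A,B$ are variables (the meta-variables), the $t_{ij},s_j$ are terms, together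 with clauses defining the other predicates occurring in the atoms $C_{kl},D_{pq}$, none of which contain $\mathit{solve}$ or $\mathit{clause}$. A clause body $B_1,\dots,B_m$ is encoded as the term $(B_1,(B_2,\dots,B_m))$ using the binary functor $,/2$ and an empty body as $\mathit{true}$; $\mathit{ce}(P)$ is the set of facts $\mathit{clause}(H,B)$, one per clause $H\leftarrow B$ of $P$; $\mathit{ce}^D(P)$ is a set of facts $\mathit{clause}(H,B,s_1,\dots,s_k)$ such that for every clause $H\leftarrow B$ of $P$ there is a unique fact of the form $\mathit{clause}(H,B,\dots)$ in it and every fact in it comes from a clause of $P$. The symbols $,/2$, $\mathit{clause}$, $\mathit{solve}$ do not occur in the language of $P$. The ``vanilla'' meta-interpreter $M_0$ is: $\mathit{solve}(\mathit{true}).$ $\mathit{solve}((A,B))\leftarrow\mathit{solve}(A),\mathit{solve}(B).$ $\mathit{solve}(H)\leftarrow\mathit{clause}(H,B),\mathit{solve}(B).$ *)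

theory Defs
  imports Main
begin

text \<open>Terms (and atoms) over function/predicate symbols named by strings;
  variables are natural numbers.  A symbol is identified by name and arity.\<close>
datatype trm = Var nat | Fn string "trm list"

fun subst :: "(nat \<Rightarrow> trm) \<Rightarrow> trm \<Rightarrow> trm" where
  "subst \<sigma> (Var x) = \<sigma> x"
| "subst \<sigma> (Fn f ts) = Fn f (map (subst \<sigma>) ts)"

fun vars :: "trm \<Rightarrow> nat set" where
  "vars (Var x) = {x}"
| "vars (Fn f ts) = (\<Union>t\<in>set ts. vars t)"

fun syms :: "trm \<Rightarrow> (string \<times> nat) set" where
  "syms (Var x) = {}"
| "syms (Fn f ts) = insert (f, length ts) (\<Union>t\<in>set ts. syms t)"

definition is_atom :: "trm \<Rightarrow> bool" where
  "is_atom t \<longleftrightarrow> (\<exists>f ts. t = Fn f ts)"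

definition is_mgu :: "(nat \<Rightarrow> trm) \<Rightarrow> trm \<Rightarrow> trm \<Rightarrow> bool" where
  "is_mgu \<theta> s t \<longleftrightarrow> subst \<theta> s = subst \<theta> t \<and>
     (\<forall>\<sigma>. subst \<sigma> s = subst \<sigma> t \<longrightarrow> (\<exists>\<delta>. \<forall>x. \<sigma> x = subst \<delta> (\<theta> x)))"

definition variant :: "trm \<Rightarrow> trm \<Rightarrow> bool" where
  "variant s t \<longleftrightarrow> (\<exists>\<rho>. bij \<rho> \<and> s = subst (Var \<circ> \<rho>) t)"

definition instance_of :: "trm \<Rightarrow> trm \<Rightarrow> bool" where
  "instance_of s t \<longleftrightarrow> (\<exists>\<sigma>. s = subst \<sigma> t)"

type_synonym clause = "trm \<times> trm list"   \<comment> \<open>head, body\<close>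
type_synonym query = "trm list"
type_synonym program = "clause set"

definition definite_program :: "program \<Rightarrow> bool" where
  "definite_program P \<longleftrightarrow> finite P \<and>
     (\<forall>(H, B) \<in> P. is_atom H \<and> (\<forall>b \<in> set B. is_atom b))"

definition ld_step :: "program \<Rightarrow> query \<Rightarrow> query \<Rightarrow> bool" where
  "ld_step P Q Q' \<longleftrightarrow> (\<exists>A R H B \<rho> \<theta>. Q = A # R \<and> (H, B) \<in> P \<and> bij \<rho> \<and>
     (vars (subst (Var \<circ> \<rho>) H) \<union> (\<Union>b\<in>set B. vars (subst (Var \<circ> \<rho>) b)))
        \<inter> (\<Union>q\<in>set Q. vars q) = {} \<and>
     is_mgu \<theta> A (subst (Var \<circ> \<rho>) H) \<and>
     Q' = map (subst \<theta>) (map (subst (Var \<circ> \<rho>)) B @ R))"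

text \<open>Call(P,S): atoms A such that a variant of A is the selected (leftmost) atom
  of some node of the LD-tree of P \<union> {Q}, for some Q in S.\<close>
definition calls :: "program \<Rightarrow> query set \<Rightarrow> trm set" where
  "calls P S = {A. \<exists>Q\<in>S. \<exists>A' R. (ld_step P)\<^sup>*\<^sup>* Q (A' # R) \<and> variant A A'}"

definition no_meta :: "trm \<Rightarrow> bool" where
  "no_meta t \<longleftrightarrow> (\<forall>(f, m) \<in> syms t. f \<noteq> ''solve'' \<and> f \<noteq> ''clause'')"

text \<open>In the language of P: none of ,/2, clause, solve occurs\<close>
definition in_obj_lang :: "trm \<Rightarrow> bool" where
  "in_obj_lang t \<longleftrightarrow> no_meta t \<and> ('','', 2) \<notin> syms t"

fun enc_body :: "trm list \<Rightarrow> trm" where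
  "enc_body [] = Fn ''true'' []"
| "enc_body [b] = b"
| "enc_body (b # c # bs) = Fn '','' [b, enc_body (c # bs)]"

definition ce :: "program \<Rightarrow> program" where
  "ce P = {(Fn ''clause'' [H, enc_body B], []) | H B. (H, B) \<in> P}"

text \<open>F is an admissible ce^D(P) with k extra arguments\<close>
definition is_ceD :: "nat \<Rightarrow> program \<Rightarrow> program \<Rightarrow> bool" where
  "is_ceD k P F \<longleftrightarrow>
     (\<forall>c \<in> F. \<exists>H B ss. c = (Fn ''clause'' (H # enc_body B # ss), []) \<and> length ss = k \<and> (H, B) \<in> P) \<and>
     (\<forall>(H, B) \<in> P. \<exists>!c \<in> F. \<exists>ss. c = (Fn ''clause'' (H # enc_body B # ss), []))"

text \<open>The vanilla meta-interpreter M0 (variables 0 = A, 1 = B)\<close>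
definition M0 :: program where
  "M0 = {(Fn ''solve'' [Fn ''true'' []], []),
         (Fn ''solve'' [Fn '','' [Var 0, Var 1]], [Fn ''solve'' [Var 0], Fn ''solve'' [Var 1]]),
         (Fn ''solve'' [Var 0], [Fn ''clause'' [Var 0, Var 1], Fn ''solve'' [Var 1]])}"

text \<open>D is a double extended meta-interpreter whose solve has n extra arguments and
  whose clause atom has k extra arguments.  a, b are the meta-variables A, B;
  R are the clauses defining the auxiliary predicates.\<close>
definition double_ext_mi :: "program \<Rightarrow> nat \<Rightarrow> nat \<Rightarrow> bool" where
  "double_ext_mi D n k \<longleftrightarrow>
    (\<exists>a b t1 t2 t3 t4 t5 t6 s C1 C2 C3 D1 D2 D3 D4 R.
       a \<noteq> b \<and>
       length t1 = n \<and> length t2 = n \<and> length t3 = n \<and> length t4 = n \<and>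
       length t5 = n \<and> length t6 = n \<and> length s = k \<and>
       (\<forall>c \<in> set (C1 @ C2 @ C3 @ D1 @ D2 @ D3 @ D4). is_atom c \<and> no_meta c) \<and>
       finite R \<and>
       (\<forall>(H, B) \<in> R. is_atom H \<and> no_meta H \<and> (\<forall>c \<in> set B. is_atom c \<and> no_meta c)) \<and>
       D = {(Fn ''solve'' (Fn ''true'' [] # t1), C1),
            (Fn ''solve'' (Fn '','' [Var a, Var b] # t2),
               D1 @ [Fn ''solve'' (Var a # t3)] @ D2 @ [Fn ''solve'' (Var b # t4)] @ C2),
            (Fn ''solve'' (Var a # t5),
               D3 @ [Fn ''clause'' (Var a # Var b # s)] @ D4 @ [Fn ''solve'' (Var b # t6)] @ C3)}
           \<union> R)"

end

theory Submission
  imports Defs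
begin


lemma subst_comp: "subst f (subst g t) = subst (\<lambda>x. subst f (g x)) t"
  by (induction t) auto

lemma subst_Var[simp]: "subst Var t = t"
  by (induction t) (auto simp: map_idI)

lemma subst_cong: "(\<And>x. x \<in> vars t \<Longrightarrow> f x = g x) \<Longrightarrow> subst f t = subst g t"
  by (induction t) auto

lemma vars_subst: "vars (subst f t) = (\<Union>y\<in>vars t. vars (f y))"
  by (induction t) auto

lemma finite_vars[simp]: "finite (vars t)"
  by (induction t) auto

fun tsize :: "trm \<Rightarrow> nat" where
  "tsize (Var x) = 1"
| "tsize (Fn f ts) = 1 + sum_list (map tsize ts)"

lemma tsize_pos: "tsize t > 0"
  by (cases t) auto

lemma member_le_sum_list: "x \<in> set xs \<Longrightarrow> (x::nat) \<le> sum_list xs"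
  by (induction xs) auto

lemma occurs_le: "x \<in> vars t \<Longrightarrow> tsize (f x) \<le> tsize (subst f t)"
proof (induction t)
  case (Var y) then show ?case by simp
next
  case (Fn g ts)
  then obtain s where s: "s \<in> set ts" "x \<in> vars s" by auto
  have "tsize (f x) \<le> tsize (subst f s)" using Fn s by auto
  also have "\<dots> \<le> sum_list (map tsize (map (subst f) ts))"
    using s by (intro member_le_sum_list) auto
  finally show ?case by simp
qed

lemma occurs_lt: assumes "x \<in> vars t" "t \<noteq> Var x" shows "tsize (f x) < tsize (subst f t)"
proof (cases t)
  case (Var y) then show ?thesis using assms by auto
next
  case (Fn g ts)
  then obtain s where s: "s \<in> set ts" "x \<in> vars s" using assms by auto
  have "tsize (f x) \<le> tsize (subst f s)" using occurs_le s by auto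
  also have "\<dots> \<le> sum_list (map tsize (map (subst f) ts))"
    using s by (intro member_le_sum_list) auto
  finally show ?thesis using Fn by simp
qed

definition unifies :: "(nat \<Rightarrow> trm) \<Rightarrow> (trm \<times> trm) list \<Rightarrow> bool" where
  "unifies f E \<longleftrightarrow> (\<forall>(s,t)\<in>set E. subst f s = subst f t)"

definition evars :: "(trm \<times> trm) list \<Rightarrow> nat set" where
  "evars E = (\<Union>(s,t)\<in>set E. vars s \<union> vars t)"

definition esize :: "(trm \<times> trm) list \<Rightarrow> nat" where
  "esize E = sum_list (map (\<lambda>(s,t). tsize s + tsize t) E)"

lemma finite_evars[simp]: "finite (evars E)"
  unfolding evars_def by auto

lemma esize_zip: "length ss = length ts \<Longrightarrow>
  esize (zip ss ts) = sum_list (map tsize ss) + sum_list (map tsize ts)"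
  by (induction ss ts rule: list_induct2) (auto simp: esize_def)

lemma evars_zip: "length ss = length ts \<Longrightarrow>
  evars (zip ss ts) = (\<Union>s\<in>set ss. vars s) \<union> (\<Union>t\<in>set ts. vars t)"
  by (induction ss ts rule: list_induct2) (auto simp: evars_def)

lemma unifies_zip: "length ss = length ts \<Longrightarrow>
  unifies f (zip ss ts) \<longleftrightarrow> map (subst f) ss = map (subst f) ts"
  by (induction ss ts rule: list_induct2) (auto simp: unifies_def)

definition is_mgu_E where
  "is_mgu_E \<theta> E \<longleftrightarrow> unifies \<theta> E \<and> (\<forall>\<phi>. unifies \<phi> E \<longrightarrow> (\<exists>\<delta>. \<forall>x. \<phi> x = subst \<delta> (\<theta> x)))"

lemma var_elim:
  assumes IH: "\<And>E2. card (evars E2) < card (evars E) \<Longrightarrow> (\<exists>\<phi>. unifies \<phi> E2) \<Longrightarrow> \<exists>\<theta>. is_mgu_E \<theta> E2"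
    and E: "E = (Var x, t) # E1 \<or> E = (t, Var x) # E1"
    and xt: "x \<notin> vars t"
    and u: "unifies \<phi> E"
  shows "\<exists>\<theta>. is_mgu_E \<theta> E"
proof -
  define sx where "sx = Var(x := t)"
  define E2 where "E2 = map (\<lambda>(a,b). (subst sx a, subst sx b)) E1"
  have uE: "unifies \<psi> E \<longleftrightarrow> \<psi> x = subst \<psi> t \<and> unifies \<psi> E1" for \<psi>
    using E by (auto simp: unifies_def)
  have tsx: "subst sx t = t"
    using xt by (intro trans[OF subst_cong subst_Var]) (auto simp: sx_def)
  have comp: "(\<lambda>y. subst \<psi> (sx y)) = \<psi>" if "\<psi> x = subst \<psi> t" for \<psi>
    using that by (auto simp: sx_def)
  have uE2: "unifies \<psi> E2" if "unifies \<psi> E" for \<psi>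
  proof -
    have "\<psi> x = subst \<psi> t" "unifies \<psi> E1" using that uE by auto
    then show ?thesis
      by (auto simp: unifies_def E2_def subst_comp comp)
  qed
  have sub: "evars E2 \<subseteq> evars E - {x}"
  proof
    fix y assume "y \<in> evars E2"
    then obtain a b where ab: "(a,b) \<in> set E1" "y \<in> vars (subst sx a) \<union> vars (subst sx b)"
      by (auto simp: evars_def E2_def)
    then show "y \<in> evars E - {x}"
      using E xt by (auto simp: vars_subst sx_def evars_def split: if_splits)
  qed
  have xin: "x \<in> evars E" using E by (auto simp: evars_def)
  have "card (evars E2) < card (evars E)"
  proof (rule psubset_card_mono)
    show "evars E2 \<subset> evars E" using sub xin by blast
  qed simp
  moreover have "\<exists>\<phi>. unifies \<phi> E2" using uE2 u by blast
  ultimately obtain \<theta>' where th: "is_mgu_E \<theta>' E2" using IH by blast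
  define \<theta> where "\<theta> = (\<lambda>y. subst \<theta>' (sx y))"
  have "unifies \<theta> E"
  proof -
    have a1: "\<theta> x = subst \<theta>' t" by (simp add: \<theta>_def sx_def)
    have a2: "subst \<theta> t = subst \<theta>' (subst sx t)" by (simp add: \<theta>_def subst_comp)
    have "\<theta> x = subst \<theta> t" using a1 a2 tsx by simp
    moreover have "unifies \<theta> E1"
      using th unfolding is_mgu_E_def unifies_def E2_def \<theta>_def
      by (auto simp: subst_comp[symmetric])
    ultimately show ?thesis using uE by auto
  qed
  moreover have "\<exists>\<delta>. \<forall>y. \<psi> y = subst \<delta> (\<theta> y)" if uu: "unifies \<psi> E" for \<psi>
  proof -
    obtain \<delta> where d: "\<forall>y. \<psi> y = subst \<delta> (\<theta>' y)" using th uE2[OF uu] unfolding is_mgu_E_def by blast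
    have px: "\<psi> x = subst \<psi> t" using uu uE by auto
    have "\<psi> y = subst \<delta> (\<theta> y)" for y
    proof (cases "y = x")
      case True
      have "subst \<delta> (\<theta> y) = subst (\<lambda>z. subst \<delta> (\<theta>' z)) t"
        using True by (simp add: \<theta>_def sx_def subst_comp)
      also have "\<dots> = subst \<psi> t" using d by metis
      finally show ?thesis using px True by simp
    next
      case False then show ?thesis using d by (simp add: \<theta>_def sx_def)
    qed
    then show ?thesis by blast
  qed
  ultimately show ?thesis unfolding is_mgu_E_def by blast
qed

lemma unif_exists: "unifies \<phi> E \<Longrightarrow> \<exists>\<theta>. is_mgu_E \<theta> E"
proof (induction E arbitrary: \<phi> rule: wf_induct[OF wf_measures[of "[\<lambda>E. card (evars E), esize]"]])
  case (1 E)
  note IH = 1(1)[rule_format]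
  show ?case
  proof (cases E)
    case Nil
    then show ?thesis unfolding is_mgu_E_def unifies_def by (intro exI[of _ Var]) auto
  next
    case (Cons p E1)
    obtain s t where p: "p = (s,t)" by (cases p)
    have smaller: "\<exists>\<theta>. is_mgu_E \<theta> E2" if "card (evars E2) < card (evars E) \<or>
        card (evars E2) = card (evars E) \<and> esize E2 < esize E" "unifies \<psi> E2" for E2 \<psi>
      using IH[of E2 \<psi>] that by auto
    have IHc: "\<And>E2. card (evars E2) < card (evars E) \<Longrightarrow> (\<exists>\<phi>. unifies \<phi> E2) \<Longrightarrow> \<exists>\<theta>. is_mgu_E \<theta> E2"
      using smaller by blast
    have same: "\<exists>\<theta>. is_mgu_E \<theta> E"
      if h: "\<And>\<psi>. unifies \<psi> E \<longleftrightarrow> unifies \<psi> E2" "evars E2 \<subseteq> evars E" "esize E2 < esize E" for E2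
    proof -
      have "card (evars E2) \<le> card (evars E)" using that(2) by (simp add: card_mono)
      moreover have "unifies \<phi> E2" using that(1) 1(2) by blast
      ultimately obtain \<theta> where "is_mgu_E \<theta> E2"
        using smaller[of E2 \<phi>] h(3) by (auto simp: le_less)
      then show ?thesis using h(1) unfolding is_mgu_E_def by blast
    qed
    have varcase: "\<exists>\<theta>. is_mgu_E \<theta> E" if "E = (Var x, r) # E1 \<or> E = (r, Var x) # E1" for x r
    proof (cases "x \<in> vars r")
      case False
      then show ?thesis using var_elim[OF IHc that False 1(2)] by blast
    next
      case True
      have ux: "subst \<phi> (Var x) = subst \<phi> r" using 1(2) that by (auto simp: unifies_def)
      show ?thesis
      proof (cases "r = Var x")
        case True
        show ?thesis
        proof (rule same[of E1])
          show "unifies \<psi> E \<longleftrightarrow> unifies \<psi> E1" for \<psi> using that True by (auto simp: unifies_def)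
          show "evars E1 \<subseteq> evars E" using that by (auto simp: evars_def)
          show "esize E1 < esize E" using that by (auto simp: esize_def tsize_pos)
        qed
      next
        case False
        then show ?thesis using occurs_lt[OF \<open>x \<in> vars r\<close> False, of \<phi>] ux by simp
      qed
    qed
    show ?thesis
    proof (cases s)
      case (Var x)
      then show ?thesis using varcase[of x t] Cons p by auto
    next
      case (Fn f ss)
      note sF = Fn
      show ?thesis
      proof (cases t)
        case (Var x)
        then show ?thesis using varcase[of x s] Cons p by auto
      next
        case (Fn g ts)
        have eq: "Fn f (map (subst \<phi>) ss) = Fn g (map (subst \<phi>) ts)"
          using 1(2) Cons p sF Fn by (auto simp: unifies_def)
        then have fg: "f = g" and len: "length ss = length ts"
          using map_eq_imp_length_eq by auto
        show ?thesis
        proof (rule same[of "zip ss ts @ E1"])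
          show "unifies \<psi> E \<longleftrightarrow> unifies \<psi> (zip ss ts @ E1)" for \<psi>
            using unifies_zip[OF len, of \<psi>] Cons p sF Fn fg by (auto simp: unifies_def)
          show "evars (zip ss ts @ E1) \<subseteq> evars E"
            using evars_zip[OF len] Cons p sF Fn by (auto simp: evars_def)
          show "esize (zip ss ts @ E1) < esize E"
            using esize_zip[OF len] Cons p sF Fn by (auto simp: esize_def)
        qed
      qed
    qed
  qed
qed

lemma mgu_exists: "subst \<phi> s = subst \<phi> t \<Longrightarrow> \<exists>\<theta>. is_mgu \<theta> s t"
  using unif_exists[of \<phi> "[(s,t)]"] by (auto simp: is_mgu_E_def is_mgu_def unifies_def)



fun meta :: "trm \<Rightarrow> bool" where
  "meta (Var x) = False"
| "meta (Fn f ts) = ((f = ''solve'' \<and> ts \<noteq> []) \<or> (f = ''clause'' \<and> 2 \<le> length ts))"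

fun proj :: "trm \<Rightarrow> trm" where
  "proj (Var x) = Var x"
| "proj (Fn f ts) = (if f = ''solve'' then Fn f (take 1 ts) else Fn f (take 2 ts))"

lemma proj_subst: "is_atom t \<Longrightarrow> proj (subst s t) = subst s (proj t)"
  by (cases t) (auto simp: take_map is_atom_def)

lemma map_proj_subst: "\<forall>a\<in>set xs. is_atom a \<Longrightarrow>
  map proj (map (subst s) xs) = map (subst s) (map proj xs)"
  by (induction xs) (auto simp: proj_subst)

lemma meta_subst: "is_atom t \<Longrightarrow> meta (subst s t) = meta t"
  by (auto simp: is_atom_def)

lemma is_atom_subst: "is_atom t \<Longrightarrow> is_atom (subst s t)"
  by (auto simp: is_atom_def)

lemma filter_meta_subst: "\<forall>a\<in>set xs. is_atom a \<Longrightarrow>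
  filter meta (map (subst s) xs) = map (subst s) (filter meta xs)"
  by (induction xs) (auto simp: meta_subst)

lemma nometa: "is_atom c \<Longrightarrow> no_meta c \<Longrightarrow> \<not> meta c"
  by (auto simp: is_atom_def no_meta_def)

definition corr :: "program \<Rightarrow> program \<Rightarrow> bool" where
  "corr Dp Mp \<longleftrightarrow>
    (\<forall>(h,b)\<in>Dp. is_atom h \<and> (\<forall>c\<in>set b. is_atom c) \<and>
       (meta h \<longrightarrow> (\<exists>hM bM \<tau>. (hM,bM) \<in> Mp \<and> proj h = subst \<tau> hM \<and>
                          map proj (filter meta b) = map (subst \<tau>) bM)) \<and>
       (\<not> meta h \<longrightarrow> filter meta b = [])) \<and>
    (\<forall>(h,b)\<in>Mp. \<forall>c\<in>set b. is_atom c)"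

definition sw :: "nat \<Rightarrow> nat \<Rightarrow> nat" where
  "sw N x = (if x \<le> N then x + N + 1 else if x \<le> 2*N+1 then x - (N+1) else x)"

lemma sw_sw: "sw N (sw N x) = x"
  by (auto simp: sw_def)

lemma bij_sw: "bij (sw N)"
  by (rule involuntory_imp_bij) (rule sw_sw)

lemma vars_ren: "vars (subst (Var \<circ> \<rho>) t) = \<rho> ` vars t"
  by (auto simp: vars_subst)

lemma step_sim:
  assumes c: "corr Dp Mp"
    and st: "ld_step Dp QD QD'"
    and aD: "\<forall>a\<in>set QD. is_atom a"
    and aM: "\<forall>a\<in>set QM. is_atom a"
    and rel: "map proj (filter meta QD) = map (subst \<sigma>) QM"
  shows "\<exists>QM' \<sigma>'. (ld_step Mp)\<^sup>*\<^sup>* QM QM' \<and> (\<forall>a\<in>set QD'. is_atom a) \<and>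
           (\<forall>a\<in>set QM'. is_atom a) \<and> map proj (filter meta QD') = map (subst \<sigma>') QM'"
proof -
  obtain A R H B \<rho> \<theta> where QD: "QD = A # R" and HB: "(H, B) \<in> Dp" and "bij \<rho>"
    and mgu: "is_mgu \<theta> A (subst (Var \<circ> \<rho>) H)"
    and QD': "QD' = map (subst \<theta>) (map (subst (Var \<circ> \<rho>)) B @ R)"
    using st unfolding ld_step_def by blast
  have aH: "is_atom H" and aB: "\<forall>c\<in>set B. is_atom c"
    and cm: "meta H \<longrightarrow> (\<exists>hM bM \<tau>. (hM,bM) \<in> Mp \<and> proj H = subst \<tau> hM \<and>
                          map proj (filter meta B) = map (subst \<tau>) bM)"
    and cn: "\<not> meta H \<longrightarrow> filter meta B = []"
    using c HB unfolding corr_def by auto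
  have aA: "is_atom A" and aR: "\<forall>a\<in>set R. is_atom a" using aD QD by auto
  have uni: "subst \<theta> A = subst \<theta> (subst (Var \<circ> \<rho>) H)" using mgu by (simp add: is_mgu_def)
  have mAH: "meta A = meta H"
    using meta_subst[OF aA, of \<theta>] meta_subst[OF is_atom_subst[OF aH], of \<theta>]
      meta_subst[OF aH, of "Var \<circ> \<rho>"] uni by simp
  have aD': "\<forall>a\<in>set QD'. is_atom a"
    using QD' aB aR by (auto intro: is_atom_subst)
  have aBr: "\<forall>a\<in>set (map (subst (Var \<circ> \<rho>)) B @ R). is_atom a"
    using aB aR by (auto intro: is_atom_subst)
  have fQD': "filter meta QD' = map (subst \<theta>) (map (subst (Var \<circ> \<rho>)) (filter meta B) @ filter meta R)"
    unfolding QD' using filter_meta_subst[OF aBr, of \<theta>] filter_meta_subst[OF aB, of "Var \<circ> \<rho>"]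
    by simp
  show ?thesis
  proof (cases "meta A")
    case False
    then have fB: "filter meta B = []" using cn mAH by simp
    have "map proj (filter meta QD') = map (subst \<theta>) (map proj (filter meta R))"
      using fQD' fB map_proj_subst[of "filter meta R" \<theta>] aR by simp
    also have "\<dots> = map (subst (\<lambda>x. subst \<theta> (\<sigma> x))) QM"
      using rel QD False by (simp add: subst_comp)
    finally show ?thesis using aD' aM by blast
  next
    case True
    then obtain hM bM \<tau> where hb: "(hM,bM) \<in> Mp" and ph: "proj H = subst \<tau> hM"
      and pb: "map proj (filter meta B) = map (subst \<tau>) bM" using cm mAH by auto
    have "map proj (filter meta QD) = proj A # map proj (filter meta R)" using QD True by simp
    then obtain g RM where QM: "QM = g # RM" and pg: "proj A = subst \<sigma> g"
      and pR: "map proj (filter meta R) = map (subst \<sigma>) RM"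
      using rel by (cases QM) auto
    define SC where "SC = vars hM \<union> (\<Union>b\<in>set bM. vars b)"
    define SQ where "SQ = (\<Union>q\<in>set QM. vars q)"
    define N where "N = Max (insert 0 (SC \<union> SQ))"
    have finS: "finite (SC \<union> SQ)" by (simp add: SC_def SQ_def)
    have leN: "y \<le> N" if "y \<in> SC \<union> SQ" for y
      unfolding N_def using finS that by (intro Max_ge) auto
    define \<rho>M where "\<rho>M = sw N"
    define Vc where "Vc = vars (subst (Var \<circ> \<rho>M) hM) \<union> (\<Union>b\<in>set bM. vars (subst (Var \<circ> \<rho>M) b))"
    have Vc: "Vc = \<rho>M ` SC" unfolding Vc_def SC_def by (auto simp: vars_ren)
    have disj: "Vc \<inter> SQ = {}"
    proof -
      have "\<rho>M y > N" if "y \<in> SC" for y using leN[of y] that by (simp add: \<rho>M_def sw_def)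
      then show ?thesis using Vc leN by fastforce
    qed
    define \<phi> where "\<phi> x = (if x \<in> Vc then subst \<theta> (subst (Var \<circ> \<rho>) (\<tau> (\<rho>M x))) else subst \<theta> (\<sigma> x))" for x
    have cl: "subst \<phi> (subst (Var \<circ> \<rho>M) t) = subst \<theta> (subst (Var \<circ> \<rho>) (subst \<tau> t))"
      if "vars t \<subseteq> SC" for t
    proof -
      have "subst \<phi> (subst (Var \<circ> \<rho>M) t) = subst (\<lambda>y. \<phi> (\<rho>M y)) t" by (simp add: subst_comp)
      also have "\<dots> = subst (\<lambda>y. subst \<theta> (subst (Var \<circ> \<rho>) (\<tau> y))) t"
      proof (rule subst_cong)
        fix y assume "y \<in> vars t"
        then have "\<rho>M y \<in> Vc" using that Vc by auto
        then show "\<phi> (\<rho>M y) = subst \<theta> (subst (Var \<circ> \<rho>) (\<tau> y))"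
          by (simp add: \<phi>_def \<rho>M_def sw_sw)
      qed
      also have "\<dots> = subst \<theta> (subst (Var \<circ> \<rho>) (subst \<tau> t))" by (simp add: subst_comp)
      finally show ?thesis .
    qed
    have qm: "subst \<phi> t = subst \<theta> (subst \<sigma> t)" if "vars t \<subseteq> SQ" for t
    proof -
      have "subst \<phi> t = subst (\<lambda>x. subst \<theta> (\<sigma> x)) t"
        by (rule subst_cong) (use that disj in \<open>auto simp: \<phi>_def\<close>)
      then show ?thesis by (simp add: subst_comp)
    qed
    have "subst \<phi> g = subst \<theta> (proj A)" using qm[of g] pg QM by (auto simp: SQ_def)
    also have "\<dots> = proj (subst \<theta> (subst (Var \<circ> \<rho>) H))" using uni proj_subst[OF aA, of \<theta>] by simp
    also have "\<dots> = subst \<theta> (subst (Var \<circ> \<rho>) (subst \<tau> hM))"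
      using proj_subst[OF is_atom_subst[OF aH], of \<theta>] proj_subst[OF aH, of "Var \<circ> \<rho>"] ph by simp
    also have "\<dots> = subst \<phi> (subst (Var \<circ> \<rho>M) hM)" using cl[of hM] by (simp add: SC_def)
    finally have unM: "subst \<phi> g = subst \<phi> (subst (Var \<circ> \<rho>M) hM)" .
    then obtain \<theta>M where mguM: "is_mgu \<theta>M g (subst (Var \<circ> \<rho>M) hM)" using mgu_exists by blast
    then obtain \<delta> where dl: "\<forall>x. \<phi> x = subst \<delta> (\<theta>M x)"
      unfolding is_mgu_def using unM by blast
    then have phieq: "(\<lambda>x. subst \<delta> (\<theta>M x)) = \<phi>" by auto
    define QM' where "QM' = map (subst \<theta>M) (map (subst (Var \<circ> \<rho>M)) bM @ RM)"
    have stM: "ld_step Mp QM QM'"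
      unfolding ld_step_def
      apply (rule exI[of _ g], rule exI[of _ RM], rule exI[of _ hM], rule exI[of _ bM],
             rule exI[of _ \<rho>M], rule exI[of _ \<theta>M])
      using QM hb bij_sw mguM disj QM'_def by (auto simp: \<rho>M_def Vc_def SQ_def)
    have aM': "\<forall>a\<in>set QM'. is_atom a"
      using c hb aM QM unfolding QM'_def corr_def by (auto intro!: is_atom_subst)
    have "map (subst \<delta>) QM' = map (subst \<phi>) (map (subst (Var \<circ> \<rho>M)) bM @ RM)"
    proof -
      have "subst \<delta> (subst \<theta>M t) = subst \<phi> t" for t by (simp only: subst_comp phieq)
      then show ?thesis unfolding QM'_def by simp
    qed
    also have "\<dots> = map (\<lambda>t. subst \<theta> (subst (Var \<circ> \<rho>) (subst \<tau> t))) bM @ map (\<lambda>t. subst \<theta> (subst \<sigma> t)) RM"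
      using cl qm QM by (auto simp: SC_def SQ_def)
    also have "\<dots> = map proj (filter meta QD')"
    proof -
      have a1: "\<forall>a\<in>set (map (subst (Var \<circ> \<rho>)) (filter meta B) @ filter meta R). is_atom a"
        using aB aR by (auto intro: is_atom_subst)
      have a2: "\<forall>a\<in>set (filter meta B). is_atom a" using aB by auto
      have "map proj (filter meta QD') = map (subst \<theta>) (map proj (map (subst (Var \<circ> \<rho>)) (filter meta B) @ filter meta R))"
        using fQD' map_proj_subst[OF a1, of \<theta>] by simp
      also have "\<dots> = map (subst \<theta>) (map (subst (Var \<circ> \<rho>)) (map (subst \<tau>) bM) @ map (subst \<sigma>) RM)"
        using map_proj_subst[OF a2, of "Var \<circ> \<rho>"] pb pR by simp
      finally show ?thesis by simp
    qed
    finally show ?thesis using stM aD' aM' by (metis r_into_rtranclp)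
  qed
qed

lemma sim:
  assumes c: "corr Dp Mp"
    and st: "(ld_step Dp)\<^sup>*\<^sup>* Q0D QD"
    and aD: "\<forall>a\<in>set Q0D. is_atom a"
    and aM: "\<forall>a\<in>set Q0M. is_atom a"
    and rel: "map proj (filter meta Q0D) = map (subst \<sigma>0) Q0M"
  shows "\<exists>QM \<sigma>. (ld_step Mp)\<^sup>*\<^sup>* Q0M QM \<and> (\<forall>a\<in>set QD. is_atom a) \<and>
           (\<forall>a\<in>set QM. is_atom a) \<and> map proj (filter meta QD) = map (subst \<sigma>) QM"
  using st
proof (induction rule: rtranclp_induct)
  case base
  then show ?case using aD aM rel by blast
next
  case (step y z)
  then obtain QM \<sigma> where h: "(ld_step Mp)\<^sup>*\<^sup>* Q0M QM" "\<forall>a\<in>set y. is_atom a"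
    "\<forall>a\<in>set QM. is_atom a" "map proj (filter meta y) = map (subst \<sigma>) QM" by blast
  from step_sim[OF c step(2) h(2-4)] h(1) show ?case
    by (meson rtranclp_trans)
qed



lemma filter_nometa: "\<forall>c\<in>set xs. is_atom c \<and> no_meta c \<Longrightarrow> filter meta xs = []"
  using nometa by (induction xs) auto

lemma corr_D:
  assumes D: "double_ext_mi D n k" and F: "is_ceD k P F"
  shows "corr (D \<union> F) (M0 \<union> ce P)"
proof -
  obtain a b t1 t2 t3 t4 t5 t6 s C1 C2 C3 D1 D2 D3 D4 R where
    ab: "a \<noteq> b" and
    at: "\<forall>c \<in> set (C1 @ C2 @ C3 @ D1 @ D2 @ D3 @ D4). is_atom c \<and> no_meta c" and
    Rp: "\<forall>(H, B) \<in> R. is_atom H \<and> no_meta H \<and> (\<forall>c \<in> set B. is_atom c \<and> no_meta c)" and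
    Deq: "D = {(Fn ''solve'' (Fn ''true'' [] # t1), C1),
            (Fn ''solve'' (Fn '','' [Var a, Var b] # t2),
               D1 @ [Fn ''solve'' (Var a # t3)] @ D2 @ [Fn ''solve'' (Var b # t4)] @ C2),
            (Fn ''solve'' (Var a # t5),
               D3 @ [Fn ''clause'' (Var a # Var b # s)] @ D4 @ [Fn ''solve'' (Var b # t6)] @ C3)}
           \<union> R"
    using D unfolding double_ext_mi_def by blast
  have f: "filter meta C1 = []" "filter meta C2 = []" "filter meta C3 = []"
     "filter meta D1 = []" "filter meta D2 = []" "filter meta D3 = []" "filter meta D4 = []"
    using at by (auto intro!: filter_nometa)
  have at': "\<forall>c\<in>set (C1 @ C2 @ C3 @ D1 @ D2 @ D3 @ D4). is_atom c" using at by blast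
  define \<tau> where "\<tau> = (\<lambda>x::nat. if x = 0 then Var a else Var b)"
  have M0m: "(Fn ''solve'' [Fn ''true'' []], []) \<in> M0 \<union> ce P"
    "(Fn ''solve'' [Fn '','' [Var 0, Var 1]], [Fn ''solve'' [Var 0], Fn ''solve'' [Var 1]]) \<in> M0 \<union> ce P"
    "(Fn ''solve'' [Var 0], [Fn ''clause'' [Var 0, Var 1], Fn ''solve'' [Var 1]]) \<in> M0 \<union> ce P"
    by (auto simp: M0_def)
  have part1: "is_atom h \<and> (\<forall>c\<in>set bd. is_atom c) \<and>
       (meta h \<longrightarrow> (\<exists>hM bM \<tau>. (hM,bM) \<in> M0 \<union> ce P \<and> proj h = subst \<tau> hM \<and>
                          map proj (filter meta bd) = map (subst \<tau>) bM)) \<and>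
       (\<not> meta h \<longrightarrow> filter meta bd = [])" if hb: "(h, bd) \<in> D \<union> F" for h bd
  proof -
    consider (c1) "(h, bd) = (Fn ''solve'' (Fn ''true'' [] # t1), C1)"
      | (c2) "(h, bd) = (Fn ''solve'' (Fn '','' [Var a, Var b] # t2),
               D1 @ [Fn ''solve'' (Var a # t3)] @ D2 @ [Fn ''solve'' (Var b # t4)] @ C2)"
      | (c3) "(h, bd) = (Fn ''solve'' (Var a # t5),
               D3 @ [Fn ''clause'' (Var a # Var b # s)] @ D4 @ [Fn ''solve'' (Var b # t6)] @ C3)"
      | (cR) "(h, bd) \<in> R" | (cF) "(h, bd) \<in> F"
      using hb Deq by blast
    then show ?thesis
    proof cases
      case c1
      have ex: "\<exists>hM bM \<tau>'. (hM,bM) \<in> M0 \<union> ce P \<and> proj h = subst \<tau>' hM \<and>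
                          map proj (filter meta bd) = map (subst \<tau>') bM"
        using M0m(1) c1 f by (intro exI[of _ "Fn ''solve'' [Fn ''true'' []]"] exI[of _ "[]"] exI[of _ Var]) auto
      have "is_atom h \<and> (\<forall>c\<in>set bd. is_atom c)" using c1 at' by (auto simp: is_atom_def)
      moreover have "meta h" using c1 by simp
      ultimately show ?thesis using ex by blast
    next
      case c2
      have "map proj (filter meta bd) = map (subst \<tau>) [Fn ''solve'' [Var 0], Fn ''solve'' [Var 1]]"
        using c2 f ab by (simp add: \<tau>_def)
      moreover have "proj h = subst \<tau> (Fn ''solve'' [Fn '','' [Var 0, Var 1]])"
        using c2 ab by (simp add: \<tau>_def)
      ultimately have ex: "\<exists>hM bM \<tau>'. (hM,bM) \<in> M0 \<union> ce P \<and> proj h = subst \<tau>' hM \<and>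
                          map proj (filter meta bd) = map (subst \<tau>') bM"
        using M0m(2) by blast
      have "is_atom h \<and> (\<forall>c\<in>set bd. is_atom c)" using c2 at' by (auto simp: is_atom_def)
      moreover have "meta h" using c2 by simp
      ultimately show ?thesis using ex by blast
    next
      case c3
      have "map proj (filter meta bd) = map (subst \<tau>) [Fn ''clause'' [Var 0, Var 1], Fn ''solve'' [Var 1]]"
        using c3 f ab by (simp add: \<tau>_def)
      moreover have "proj h = subst \<tau> (Fn ''solve'' [Var 0])"
        using c3 ab by (simp add: \<tau>_def)
      ultimately have ex: "\<exists>hM bM \<tau>'. (hM,bM) \<in> M0 \<union> ce P \<and> proj h = subst \<tau>' hM \<and>
                          map proj (filter meta bd) = map (subst \<tau>') bM"
        using M0m(3) by blast
      have "is_atom h \<and> (\<forall>c\<in>set bd. is_atom c)" using c3 at' by (auto simp: is_atom_def)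
      moreover have "meta h" using c3 by simp
      ultimately show ?thesis using ex by blast
    next
      case cR
      then have r: "is_atom h" "no_meta h" "\<forall>c \<in> set bd. is_atom c \<and> no_meta c" using Rp by auto
      then have "\<not> meta h" "filter meta bd = []" using nometa filter_nometa by auto
      then show ?thesis using r by blast
    next
      case cF
      have F1: "\<forall>c \<in> F. \<exists>H B ss. c = (Fn ''clause'' (H # enc_body B # ss), []) \<and> length ss = k \<and> (H, B) \<in> P"
        using F unfolding is_ceD_def by (rule conjunct1)
      obtain H B ss where hbF0: "(h, bd) = (Fn ''clause'' (H # enc_body B # ss), [])" "(H, B) \<in> P"
        using F1[rule_format, OF cF] by blast
      then have hbF: "h = Fn ''clause'' (H # enc_body B # ss)" "bd = []" "(H, B) \<in> P" by simp_all
      then have m: "(Fn ''clause'' [H, enc_body B], []) \<in> M0 \<union> ce P" by (auto simp: ce_def)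
      have ex: "\<exists>hM bM \<tau>'. (hM,bM) \<in> M0 \<union> ce P \<and> proj h = subst \<tau>' hM \<and>
                          map proj (filter meta bd) = map (subst \<tau>') bM"
        using m hbF by (intro exI[of _ "Fn ''clause'' [H, enc_body B]"] exI[of _ "[]"] exI[of _ Var]) auto
      have "is_atom h \<and> (\<forall>c\<in>set bd. is_atom c)" using hbF by (auto simp: is_atom_def)
      moreover have "meta h" using hbF by simp
      ultimately show ?thesis using ex by blast
    qed
  qed
  have part2: "\<forall>(h,bd)\<in>M0 \<union> ce P. \<forall>c\<in>set bd. is_atom c"
    by (auto simp: M0_def ce_def is_atom_def)
  show ?thesis unfolding corr_def using part1 part2 by blast
qed

theorem mainTheorem6:
  fixes D P F :: program and n k :: nat and Q0 :: trm and u :: "trm list"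
  assumes "double_ext_mi D n k"
    and "definite_program P"
    and "\<forall>(H, B) \<in> P. in_obj_lang H \<and> (\<forall>c \<in> set B. in_obj_lang c)"
    and "is_ceD k P F"
    and "is_atom Q0" and "in_obj_lang Q0"
    and "length u = n"
  shows "\<forall>Q ts. length ts = n \<longrightarrow>
           Fn ''solve'' (Q # ts) \<in> calls (D \<union> F) {[Fn ''solve'' (Q0 # u)]} \<longrightarrow>
           (\<exists>G. Fn ''solve'' [G] \<in> calls (M0 \<union> ce P) {[Fn ''solve'' [Q0]]} \<and> instance_of Q G)"
proof (intro allI impI)
  fix Q ts
  assume "Fn ''solve'' (Q # ts) \<in> calls (D \<union> F) {[Fn ''solve'' (Q0 # u)]}"
  then obtain A' R \<rho> where der: "(ld_step (D \<union> F))\<^sup>*\<^sup>* [Fn ''solve'' (Q0 # u)] (A' # R)"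
    and bj: "bij \<rho>" and va: "Fn ''solve'' (Q # ts) = subst (Var \<circ> \<rho>) A'"
    unfolding calls_def variant_def by blast
  have c: "corr (D \<union> F) (M0 \<union> ce P)" using corr_D assms(1,4) by blast
  obtain QM \<sigma> where mder: "(ld_step (M0 \<union> ce P))\<^sup>*\<^sup>* [Fn ''solve'' [Q0]] QM"
    and aD: "\<forall>a\<in>set (A' # R). is_atom a" and aM: "\<forall>a\<in>set QM. is_atom a"
    and rel: "map proj (filter meta (A' # R)) = map (subst \<sigma>) QM"
    using sim[OF c der, of "[Fn ''solve'' [Q0]]" Var] by (auto simp: is_atom_def)
  obtain f xs where A': "A' = Fn f xs" using aD by (auto simp: is_atom_def)
  then obtain Q' ts' where fx: "f = ''solve''" "xs = Q' # ts'" and QQ: "Q = subst (Var \<circ> \<rho>) Q'"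
    using va by (cases xs) auto
  have "map proj (filter meta (A' # R)) = Fn ''solve'' [Q'] # map proj (filter meta R)"
    using A' fx by simp
  then obtain g RM where QM: "QM = g # RM" and pg: "Fn ''solve'' [Q'] = subst \<sigma> g"
    using rel by (cases QM) auto
  obtain f' ys where g: "g = Fn f' ys" using aM QM by (auto simp: is_atom_def)
  then obtain G where G: "g = Fn ''solve'' [G]" and QG: "Q' = subst \<sigma> G"
    using pg by (cases ys) auto
  have "variant (Fn ''solve'' [G]) (Fn ''solve'' [G])"
    unfolding variant_def by (rule exI[of _ id]) simp
  then have "Fn ''solve'' [G] \<in> calls (M0 \<union> ce P) {[Fn ''solve'' [Q0]]}"
    unfolding calls_def using mder QM G by blast
  moreover have "instance_of Q G"
    unfolding instance_of_def QQ QG by (auto simp: subst_comp)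
  ultimately show "\<exists>G. Fn ''solve'' [G] \<in> calls (M0 \<union> ce P) {[Fn ''solve'' [Q0]]} \<and> instance_of Q G"
    by blast
qed

end
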